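(* Let $(\mathbb S,+,\cdot)$ be an Essential S-Structure. Then $(\mathbb S,+,\cdot)$ is an S-Extension of $(\mathbb S_0,+,\cdot)$ (the operations of $\mathbb S$ restricted to $\mathbb S_0$).
   Context: An S-Structure is a triple $(\mathbb S,+,\cdot)$ where $\mathbb S$ is a set and $+,\cdot$ are binary operations on $\mathbb S$ such that: $(\mathbb S,+)$ is a commutative group with identity $0$ (the inverse of $s$ is written $-s$, and $s-t:=s+(-t)$); $\mathbb S$ is closed under $\cdot$; and there exists $s\in\mathbb S$ with $0\cdot s\neq 0$ or $s\cdot 0\neq 0$. Multiplication binds tighter than addition. The structures considered come with a distinguished element of $\mathbb S$ denoted $1$. It is Commutative if $s\cdot t=t\cdot s$ for all $s,t$. For a Commutative S-Structure and $\alpha\in\mathbb S$, put $\mathbb S_\alpha=\{s\in\mathbb S:0\cdot s=s\cdot 0=\alpha\}$ and $\Lambda=\{\alpha\in\mathbb S:\mathbb S_\alpha\neq\emptyset\}$. Wheel Distributive: $s\cdot(t+r)+(s\cdot 0)=(s\cdot t)+(s\cdot r)$ for all $s,t,r\in\mathbb S$. S-Associative: for all $m,n\in\mathbb S_0$ and $s\in\mathbb S$, $m\cdot(n\cdot s)=(m\cdot n)\cdot s-([(m-1)\cdot(n-1)]\cdot(0\cdot s))$. Base: if $\mathbb S_0\neq\emptyset$ and $\alpha\in\Lambda$, $q\in\mathbb S_\alpha$ is a Base for $\mathbb S_\alpha$ if $q+\beta\in\mathbb S_\alpha$ for all $\beta\in\mathbb S_0$ and every $s\in\mathbb S_\alpha$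 equals $q+\beta$ for some $\beta\in\mathbb S_0$. Coordinated: $\mathbb S_0\neq\emptyset$ and every $\mathbb S_\alpha$ with $\alpha\in\Lambda$ has a Base. Standard Bases: a Coordinated Commutative S-Structure has Standard Bases if there is a specified element $q_0(1)\in\mathbb S_1$ which is a Base for $\mathbb S_1$, and for every $\alpha\in\Lambda$ the element $q_0(\alpha):=\alpha\cdot(q_0(1)+1)-1$ lies in $\mathbb S_\alpha$ and is a Base for $\mathbb S_\alpha$. An Essential S-Structure is an S-Structure that is Commutative, Wheel Distributive, S-Associative, has Standard Bases (in particular is Coordinated), satisfies $0,1\in\mathbb S_0$, and satisfies $\mathbb S_0=\{1\cdot x:x\in\mathbb S_0\}$. S-Extension: $(\mathbb S_F,+,\cdot)$ is an S-Extension of $(F,+_F,\cdot_F)$ if (1) $F$ is closed under $+_F$ and under $\cdot_F$; (2) $(\mathbb S_F,+,\cdot)$ is an S-Structure; (3) there is a set $F_{\mathbb S}\subset\mathbb S_F$ and an isomorphism $\phi:(F,+_F,\cdot_F)\to(F_{\mathbb S},+,\cdot)$ (a bijection preserving both operations). *)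

theory Defs
  imports Main
begin

text \<open>The additive identity zero and additive inverse neg are passed explicitly but are
  required to be the (unique) identity and inverses of the commutative group (S,add).\<close>

definition s_structure ::
  "'a set \<Rightarrow> ('a \<Rightarrow> 'a \<Rightarrow> 'a) \<Rightarrow> ('a \<Rightarrow> 'a \<Rightarrow> 'a) \<Rightarrow> 'a \<Rightarrow> ('a \<Rightarrow> 'a) \<Rightarrow> 'a \<Rightarrow> bool" where
  "s_structure S add mul zero neg one \<longleftrightarrow>
     (\<forall>s\<in>S. \<forall>t\<in>S. add s t \<in> S) \<and>
     (\<forall>s\<in>S. \<forall>t\<in>S. \<forall>r\<in>S. add (add s t) r = add s (add t r)) \<and>
     (\<forall>s\<in>S. \<forall>t\<in>S. add s t = add t s) \<and>
     zero \<in> S \<and> (\<forall>s\<in>S. add zero s = s \<and> add s zero = s) \<and>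
     (\<forall>s\<in>S. neg s \<in> S \<and> add s (neg s) = zero \<and> add (neg s) s = zero) \<and>
     (\<forall>s\<in>S. \<forall>t\<in>S. mul s t \<in> S) \<and>
     (\<exists>s\<in>S. mul zero s \<noteq> zero \<or> mul s zero \<noteq> zero) \<and>
     one \<in> S"

definition s_commutative :: "'a set \<Rightarrow> ('a \<Rightarrow> 'a \<Rightarrow> 'a) \<Rightarrow> bool" where
  "s_commutative S mul \<longleftrightarrow> (\<forall>s\<in>S. \<forall>t\<in>S. mul s t = mul t s)"

definition s_fiber :: "'a set \<Rightarrow> ('a \<Rightarrow> 'a \<Rightarrow> 'a) \<Rightarrow> 'a \<Rightarrow> 'a \<Rightarrow> 'a set" where
  "s_fiber S mul zero \<alpha> = {s\<in>S. mul zero s = \<alpha> \<and> mul s zero = \<alpha>}"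

definition s_Lambda :: "'a set \<Rightarrow> ('a \<Rightarrow> 'a \<Rightarrow> 'a) \<Rightarrow> 'a \<Rightarrow> 'a set" where
  "s_Lambda S mul zero = {\<alpha>\<in>S. s_fiber S mul zero \<alpha> \<noteq> {}}"

definition wheel_distributive ::
  "'a set \<Rightarrow> ('a \<Rightarrow> 'a \<Rightarrow> 'a) \<Rightarrow> ('a \<Rightarrow> 'a \<Rightarrow> 'a) \<Rightarrow> 'a \<Rightarrow> bool" where
  "wheel_distributive S add mul zero \<longleftrightarrow>
     (\<forall>s\<in>S. \<forall>t\<in>S. \<forall>r\<in>S. add (mul s (add t r)) (mul s zero) = add (mul s t) (mul s r))"

definition s_associative ::
  "'a set \<Rightarrow> ('a \<Rightarrow> 'a \<Rightarrow> 'a) \<Rightarrow> ('a \<Rightarrow> 'a \<Rightarrow> 'a) \<Rightarrow> 'a \<Rightarrow> ('a \<Rightarrow> 'a) \<Rightarrow> 'a \<Rightarrow> bool" where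
  "s_associative S add mul zero neg one \<longleftrightarrow>
     (\<forall>m\<in>s_fiber S mul zero zero. \<forall>n\<in>s_fiber S mul zero zero. \<forall>s\<in>S.
        mul m (mul n s) =
        add (mul (mul m n) s)
            (neg (mul (mul (add m (neg one)) (add n (neg one))) (mul zero s))))"

definition is_base ::
  "'a set \<Rightarrow> ('a \<Rightarrow> 'a \<Rightarrow> 'a) \<Rightarrow> ('a \<Rightarrow> 'a \<Rightarrow> 'a) \<Rightarrow> 'a \<Rightarrow> 'a \<Rightarrow> 'a \<Rightarrow> bool" where
  "is_base S add mul zero \<alpha> q \<longleftrightarrow>
     s_fiber S mul zero zero \<noteq> {} \<and> \<alpha> \<in> s_Lambda S mul zero \<and>
     q \<in> s_fiber S mul zero \<alpha> \<and>
     (\<forall>\<beta>\<in>s_fiber S mul zero zero. add q \<beta> \<in> s_fiber S mul zero \<alpha>) \<and>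
     (\<forall>s\<in>s_fiber S mul zero \<alpha>. \<exists>\<beta>\<in>s_fiber S mul zero zero. s = add q \<beta>)"

definition coordinated ::
  "'a set \<Rightarrow> ('a \<Rightarrow> 'a \<Rightarrow> 'a) \<Rightarrow> ('a \<Rightarrow> 'a \<Rightarrow> 'a) \<Rightarrow> 'a \<Rightarrow> bool" where
  "coordinated S add mul zero \<longleftrightarrow>
     s_fiber S mul zero zero \<noteq> {} \<and>
     (\<forall>\<alpha>\<in>s_Lambda S mul zero. \<exists>q. is_base S add mul zero \<alpha> q)"

definition standard_bases ::
  "'a set \<Rightarrow> ('a \<Rightarrow> 'a \<Rightarrow> 'a) \<Rightarrow> ('a \<Rightarrow> 'a \<Rightarrow> 'a) \<Rightarrow> 'a \<Rightarrow> ('a \<Rightarrow> 'a) \<Rightarrow> 'a \<Rightarrow> bool" where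
  "standard_bases S add mul zero neg one \<longleftrightarrow>
     coordinated S add mul zero \<and> s_commutative S mul \<and>
     (\<exists>q1. q1 \<in> s_fiber S mul zero one \<and> is_base S add mul zero one q1 \<and>
        (\<forall>\<alpha>\<in>s_Lambda S mul zero.
           add (mul \<alpha> (add q1 one)) (neg one) \<in> s_fiber S mul zero \<alpha> \<and>
           is_base S add mul zero \<alpha> (add (mul \<alpha> (add q1 one)) (neg one))))"

definition essential_s_structure ::
  "'a set \<Rightarrow> ('a \<Rightarrow> 'a \<Rightarrow> 'a) \<Rightarrow> ('a \<Rightarrow> 'a \<Rightarrow> 'a) \<Rightarrow> 'a \<Rightarrow> ('a \<Rightarrow> 'a) \<Rightarrow> 'a \<Rightarrow> bool" where
  "essential_s_structure S add mul zero neg one \<longleftrightarrow>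
     s_structure S add mul zero neg one \<and> s_commutative S mul \<and>
     wheel_distributive S add mul zero \<and> s_associative S add mul zero neg one \<and>
     standard_bases S add mul zero neg one \<and>
     zero \<in> s_fiber S mul zero zero \<and> one \<in> s_fiber S mul zero zero \<and>
     s_fiber S mul zero zero = {mul one x | x. x \<in> s_fiber S mul zero zero}"

definition s_extension ::
  "'a set \<Rightarrow> ('a \<Rightarrow> 'a \<Rightarrow> 'a) \<Rightarrow> ('a \<Rightarrow> 'a \<Rightarrow> 'a) \<Rightarrow> 'a \<Rightarrow> ('a \<Rightarrow> 'a) \<Rightarrow> 'a \<Rightarrow>
   'b set \<Rightarrow> ('b \<Rightarrow> 'b \<Rightarrow> 'b) \<Rightarrow> ('b \<Rightarrow> 'b \<Rightarrow> 'b) \<Rightarrow> bool" where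
  "s_extension SF add mul zero neg one F addF mulF \<longleftrightarrow>
     (\<forall>x\<in>F. \<forall>y\<in>F. addF x y \<in> F \<and> mulF x y \<in> F) \<and>
     s_structure SF add mul zero neg one \<and>
     (\<exists>FS \<phi>. FS \<subseteq> SF \<and> bij_betw \<phi> F FS \<and>
        (\<forall>x\<in>F. \<forall>y\<in>F. \<phi> (addF x y) = add (\<phi> x) (\<phi> y) \<and> \<phi> (mulF x y) = mul (\<phi> x) (\<phi> y)))"

end

theory Submission
  imports Defs
begin

theorem theorem3p1p2:
  fixes S :: "'a set" and add mul :: "'a \<Rightarrow> 'a \<Rightarrow> 'a" and zero one :: 'a and neg :: "'a \<Rightarrow> 'a"
  assumes "essential_s_structure S add mul zero neg one"
  shows "s_extension S add mul zero neg one (s_fiber S mul zero zero) add mul"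
proof -
  let ?S0 = "s_fiber S mul zero zero"
  have ss: "s_structure S add mul zero neg one" and com: "s_commutative S mul"
    and wd: "wheel_distributive S add mul zero" and sa: "s_associative S add mul zero neg one"
    and z0: "zero \<in> ?S0" and o0: "one \<in> ?S0"
    using assms unfolding essential_s_structure_def by auto
  have addS: "\<And>s t. s \<in> S \<Longrightarrow> t \<in> S \<Longrightarrow> add s t \<in> S"
    and mulS: "\<And>s t. s \<in> S \<Longrightarrow> t \<in> S \<Longrightarrow> mul s t \<in> S"
    and negS: "\<And>s. s \<in> S \<Longrightarrow> neg s \<in> S"
    and zS: "zero \<in> S"
    and addz: "\<And>s. s \<in> S \<Longrightarrow> add s zero = s"
    and addz': "\<And>s. s \<in> S \<Longrightarrow> add zero s = s"
    and addneg: "\<And>s. s \<in> S \<Longrightarrow> add s (neg s) = zero"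
    using ss unfolding s_structure_def by auto
  have mc: "\<And>s t. s \<in> S \<Longrightarrow> t \<in> S \<Longrightarrow> mul s t = mul t s"
    using com unfolding s_commutative_def by auto
  have fib: "\<And>x. x \<in> ?S0 \<longleftrightarrow> x \<in> S \<and> mul zero x = zero"
    unfolding s_fiber_def using mc zS by auto
  have wd': "\<And>s t r. s \<in> S \<Longrightarrow> t \<in> S \<Longrightarrow> r \<in> S \<Longrightarrow>
      add (mul s (add t r)) (mul s zero) = add (mul s t) (mul s r)"
    using wd unfolding wheel_distributive_def by auto
  have sa': "\<And>m n s. m \<in> ?S0 \<Longrightarrow> n \<in> ?S0 \<Longrightarrow> s \<in> S \<Longrightarrow>
        mul m (mul n s) = add (mul (mul m n) s)
            (neg (mul (mul (add m (neg one)) (add n (neg one))) (mul zero s)))"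
    using sa unfolding s_associative_def by auto
  have zz: "mul zero zero = zero" using z0 fib by auto
  have oS: "one \<in> S" using o0 fib by auto
  have negz: "neg zero = zero" using addneg[OF zS] addz'[OF negS[OF zS]] by simp
  have addc: "\<And>m n. m \<in> ?S0 \<Longrightarrow> n \<in> ?S0 \<Longrightarrow> add m n \<in> ?S0"
  proof -
    fix m n assume "m \<in> ?S0" "n \<in> ?S0"
    hence m: "m \<in> S" "mul zero m = zero" and n: "n \<in> S" "mul zero n = zero" using fib by auto
    have "add (mul zero (add m n)) zero = zero"
      using wd'[OF zS m(1) n(1)] zz m n addz zS by simp
    hence "mul zero (add m n) = zero" using addz mulS addS m n zS by metis
    thus "add m n \<in> ?S0" using fib addS m n by auto
  qed
  have negc: "\<And>m. m \<in> ?S0 \<Longrightarrow> neg m \<in> ?S0"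
  proof -
    fix m assume "m \<in> ?S0"
    hence m: "m \<in> S" "mul zero m = zero" using fib by auto
    have "add (mul zero (add m (neg m))) zero = add zero (mul zero (neg m))"
      using wd'[OF zS m(1) negS[OF m(1)]] zz m by simp
    hence "mul zero (neg m) = zero" using addneg m zz addz addz' zS mulS negS by metis
    thus "neg m \<in> ?S0" using fib negS m by auto
  qed
  have no: "neg one \<in> ?S0" using negc o0 .
  have noS: "neg one \<in> S" using negS oS .
  have key: "\<And>c. c \<in> ?S0 \<Longrightarrow> mul (mul (neg one) c) zero = zero"
  proof -
    fix c assume c: "c \<in> ?S0"
    hence cS: "c \<in> S" using fib by auto
    define n where "n = add c one"
    have n: "n \<in> ?S0" using addc[OF c o0] n_def by simp
    have nS: "n \<in> S" using n fib by auto
    have nm: "add n (neg one) = c"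
    proof -
      have "add n (neg one) = add c (add one (neg one))"
        using ss cS oS noS unfolding s_structure_def n_def by metis
      thus ?thesis using addneg[OF oS] addz[OF cS] by simp
    qed
    have e: "add zero (neg one) = neg one" using addz' noS .
    have "mul zero (mul n zero) = add (mul (mul zero n) zero)
            (neg (mul (mul (add zero (neg one)) (add n (neg one))) (mul zero zero)))"
      using sa'[OF z0 n zS] .
    hence "zero = add zero (neg (mul (mul (neg one) c) zero))"
      using n fib mc nS zS zz e nm by simp
    hence "neg (mul (mul (neg one) c) zero) = zero"
      using addz' negS mulS noS cS zS by metis
    hence "neg (neg (mul (mul (neg one) c) zero)) = zero" using negz by simp
    moreover have "\<And>x. x \<in> S \<Longrightarrow> neg (neg x) = x"
    proof -
      fix x assume x: "x \<in> S"
      have "neg (neg x) = add (neg (neg x)) (add (neg x) x)"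
        using ss x unfolding s_structure_def by metis
      also have "\<dots> = add (add (neg (neg x)) (neg x)) x"
        using ss x unfolding s_structure_def by metis
      also have "\<dots> = x" using ss x unfolding s_structure_def by metis
      finally show "neg (neg x) = x" .
    qed
    ultimately show "mul (mul (neg one) c) zero = zero"
      using mulS noS cS zS by metis
  qed
  have mulc: "\<And>a b. a \<in> ?S0 \<Longrightarrow> b \<in> ?S0 \<Longrightarrow> mul a b \<in> ?S0"
  proof -
    fix a b assume a: "a \<in> ?S0" and b: "b \<in> ?S0"
    have aS: "a \<in> S" and bS: "b \<in> S" and b0: "mul zero b = zero" using a b fib by auto
    have am: "add a (neg one) \<in> ?S0" using addc[OF a no] .
    have e: "add zero (neg one) = neg one" using addz' noS .
    have "mul zero (mul a b) = add (mul (mul zero a) b)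
            (neg (mul (mul (add zero (neg one)) (add a (neg one))) (mul zero b)))"
      using sa'[OF z0 a bS] .
    also have "\<dots> = add (mul zero b) (neg zero)"
      using key[OF am] a fib e b0 by simp
    also have "\<dots> = zero" using b0 negz addz zS by simp
    finally show "mul a b \<in> ?S0" using fib mulS aS bS by auto
  qed
  show ?thesis unfolding s_extension_def
  proof (intro conjI)
    show "\<forall>x\<in>?S0. \<forall>y\<in>?S0. add x y \<in> ?S0 \<and> mul x y \<in> ?S0" using addc mulc by auto
    show "s_structure S add mul zero neg one" by (rule ss)
    show "\<exists>FS \<phi>. FS \<subseteq> S \<and> bij_betw \<phi> ?S0 FS \<and>
        (\<forall>x\<in>?S0. \<forall>y\<in>?S0. \<phi> (add x y) = add (\<phi> x) (\<phi> y) \<and> \<phi> (mul x y) = mul (\<phi> x) (\<phi> y))"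
      by (rule exI[of _ ?S0], rule exI[of _ id]) (auto simp: s_fiber_def)
  qed
qed

end
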